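(* For $a\in\mathbb{R}$, let $f_a$ be the solution of the radial Loewner PDE $$\frac{\partial f}{\partial t}(z,t)=-z f'(z,t)\,\frac{e^{iat}+z}{e^{iat}-z},\qquad f(z,0)=z,\quad (z,t)\in\mathbb{D}\times[0,\infty).$$ Then for every $t\ge0$, $f_a(\cdot,t)\to h(\cdot,t)$ locally uniformly in $\mathbb{D}$ as $a\to\infty$, where $h(z,t)=ze^{-t}$.
   Context: $\mathbb{D}$ is the unit disc and $f'=\partial f/\partial z$. *)

theory Defs
  imports "HOL-Complex_Analysis.Complex_Analysis"
begin

text \<open>f is a solution of the radial Loewner PDE with driving point exp(i a t):
  df/dt (z,t) = - z f'(z,t) (e^{iat}+z)/(e^{iat}-z), f(z,0) = z, on D x [0,oo).
  Regularity: f jointly continuous, holomorphic in z for each t, differentiable in t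
  (one-sided at t = 0). This makes the solution unique.\<close>
definition loewner_sol :: "real \<Rightarrow> (complex \<Rightarrow> real \<Rightarrow> complex) \<Rightarrow> bool" where
  "loewner_sol a f \<longleftrightarrow>
     continuous_on (ball 0 1 \<times> {0..}) (\<lambda>(z,t). f z t) \<and>
     (\<forall>t\<ge>0. (\<lambda>z. f z t) holomorphic_on ball 0 1) \<and>
     (\<forall>z\<in>ball 0 1. f z 0 = z) \<and>
     (\<forall>z\<in>ball 0 1. \<forall>t\<ge>0.
        ((\<lambda>s. f z s) has_vector_derivative
           (- z * deriv (\<lambda>w. f w t) z *
              ((exp (\<i> * of_real (a * t)) + z) / (exp (\<i> * of_real (a * t)) - z))))
        (at t within {0..}))"

end

theory Submission
  imports Defs
begin

lemma deriv_cont: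
  fixes f :: "complex \<Rightarrow> real \<Rightarrow> complex"
  assumes cont: "continuous_on (ball 0 1 \<times> {0..}) (\<lambda>(z,t). f z t)"
  and hol: "\<And>t. t \<ge> 0 \<Longrightarrow> (\<lambda>z. f z t) holomorphic_on ball 0 1"
  shows "continuous_on ({0..} \<times> ball 0 1) (\<lambda>(t,z). deriv (\<lambda>w. f w t) z)"
  unfolding continuous_on_iff
proof (intro ballI allI impI)
  fix x :: "real \<times> complex" and e :: real
  assume x: "x \<in> {0..} \<times> ball 0 1" and e: "e > 0"
  obtain t0 z0 where xx: "x = (t0,z0)" by fastforce
  have t0: "t0 \<ge> 0" and z0: "norm z0 < 1" using x xx by auto
  define \<rho> where "\<rho> = (1 - norm z0)/4"
  have \<rho>: "\<rho> > 0" using z0 by (simp add: \<rho>_def)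
  define Kc where "Kc = cball z0 (2*\<rho>) \<times> ({0..} \<inter> cball t0 1)"
  have "compact Kc" unfolding Kc_def
    by (intro compact_Times compact_cball closed_Int_compact closed_atLeast)
  moreover have KS: "Kc \<subseteq> ball 0 1 \<times> {0..}"
  proof
    fix x assume "x \<in> Kc"
    then obtain w t where x: "x = (w,t)" "dist z0 w \<le> 2*\<rho>" "t \<ge> 0" by (auto simp: Kc_def)
    have "norm w \<le> norm z0 + dist z0 w"
      by (metis dist_0_norm dist_commute dist_triangle)
    then have "norm w < 1" using x z0 by (simp add: \<rho>_def)
    then show "x \<in> ball 0 1 \<times> {0..}" using x by simp
  qed
  ultimately have "uniformly_continuous_on Kc (\<lambda>(z,t). f z t)"
    using compact_uniformly_continuous continuous_on_subset cont by blast
  then obtain \<eta> where \<eta>: "\<eta> > 0" and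
     \<eta>f: "\<And>x x'. x \<in> Kc \<Longrightarrow> x' \<in> Kc \<Longrightarrow> dist x' x < \<eta> \<Longrightarrow>
         dist ((\<lambda>(z,t). f z t) x') ((\<lambda>(z,t). f z t) x) < e*\<rho>/2"
    unfolding uniformly_continuous_on_def using e \<rho>
    by (metis (no_types, lifting) divide_pos_pos mult_pos_pos zero_less_numeral)
  have "(deriv (\<lambda>w. f w t0)) holomorphic_on ball 0 1"
    using hol[OF t0] by (rule holomorphic_deriv) simp
  then have "continuous_on (ball 0 1) (deriv (\<lambda>w. f w t0))"
    by (rule holomorphic_on_imp_continuous_on)
  then obtain \<eta>2 where \<eta>2: "\<eta>2 > 0" and
    \<eta>2f: "\<And>z. z \<in> ball 0 1 \<Longrightarrow> dist z z0 < \<eta>2 \<Longrightarrow>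
        dist (deriv (\<lambda>w. f w t0) z) (deriv (\<lambda>w. f w t0) z0) < e/2"
    unfolding continuous_on_iff using z0 e by (metis half_gt_zero mem_ball_0)
  define d where "d = min (min \<rho> \<eta>) (min \<eta>2 1)"
  have d: "d > 0" using \<rho> \<eta> \<eta>2 by (simp add: d_def)
  show "\<exists>d>0. \<forall>x'\<in>{0..} \<times> ball 0 1. dist x' x < d \<longrightarrow>
        dist ((\<lambda>(t,z). deriv (\<lambda>w. f w t) z) x') ((\<lambda>(t,z). deriv (\<lambda>w. f w t) z) x) < e"
  proof (intro exI[of _ d] conjI ballI impI d)
    fix x' :: "real \<times> complex"
    assume x': "x' \<in> {0..} \<times> ball 0 1" and dx: "dist x' x < d"
    obtain t z where xx': "x' = (t,z)" by fastforce
    have t: "t \<ge> 0" and z: "norm z < 1" and dz: "dist (t,z) (t0,z0) < d" using x' xx' dx xx by auto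
    have dt: "dist t t0 < d" using dz dist_fst_le[of "(t,z)" "(t0,z0)"] by simp
    have dzz: "dist z z0 < d" using dz dist_snd_le[of "(t,z)" "(t0,z0)"] by simp
    define h where "h = (\<lambda>w. f w t - f w t0)"
    have bsub: "cball z \<rho> \<subseteq> ball 0 1"
    proof
      fix w assume "w \<in> cball z \<rho>"
      then have "dist z w \<le> \<rho>" by simp
      moreover have "norm w \<le> norm z0 + dist z0 z + dist z w"
        by (metis add.commute add_le_cancel_left dist_0_norm dist_commute dist_triangle order.trans)
      ultimately show "w \<in> ball 0 1" using dzz z0 by (simp add: \<rho>_def d_def dist_commute)
    qed
    have hol_h: "h holomorphic_on ball 0 1" unfolding h_def
      using hol t t0 by (intro holomorphic_intros) auto
    have "norm ((deriv ^^ 1) h z) \<le> (fact 1) * (e*\<rho>/2) / \<rho>^1"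
    proof (rule Cauchy_inequality)
      show "h holomorphic_on ball z \<rho>" using hol_h bsub by (meson ball_subset_cball holomorphic_on_subset order_trans)
      show "continuous_on (cball z \<rho>) h"
        using hol_h bsub holomorphic_on_imp_continuous_on continuous_on_subset by blast
      show "0 < \<rho>" by (rule \<rho>)
      fix w assume w: "norm (z - w) = \<rho>"
      have "dist z0 w \<le> dist z0 z + dist z w" by (rule dist_triangle)
      then have w2: "dist z0 w \<le> 2*\<rho>" using w dzz by (simp add: d_def dist_norm norm_minus_commute)
      have tt: "dist t0 t \<le> 1" using dt by (simp add: d_def dist_commute)
      have "(w,t) \<in> Kc" "(w,t0) \<in> Kc" using w2 tt t t0 by (auto simp: Kc_def)
      moreover have "dist (w,t) (w,t0) < \<eta>" using dt by (simp add: dist_Pair_Pair d_def)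
      ultimately have "dist (f w t) (f w t0) < e*\<rho>/2" using \<eta>f by fastforce
      then show "norm (h w) \<le> e*\<rho>/2" by (simp add: h_def dist_norm)
    qed
    then have "norm (deriv h z) \<le> e/2" using \<rho> by simp
    moreover have "deriv h z = deriv (\<lambda>w. f w t) z - deriv (\<lambda>w. f w t0) z"
      unfolding h_def
      using hol t t0 z
      by (intro deriv_diff holomorphic_on_imp_differentiable_at[of _ "ball 0 1"]) auto
    moreover have "dist (deriv (\<lambda>w. f w t0) z) (deriv (\<lambda>w. f w t0) z0) < e/2"
      using \<eta>2f z dzz by (simp add: d_def)
    ultimately have "dist (deriv (\<lambda>w. f w t) z) (deriv (\<lambda>w. f w t0) z0) < e"
      using dist_triangle[of "deriv (\<lambda>w. f w t) z" "deriv (\<lambda>w. f w t0) z0" "deriv (\<lambda>w. f w t0) z"]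
      by (simp add: dist_norm)
    then show "dist ((\<lambda>(t,z). deriv (\<lambda>w. f w t) z) x') ((\<lambda>(t,z). deriv (\<lambda>w. f w t) z) x) < e"
      by (simp add: xx xx')
  qed
qed

lemma chain_rule:
  fixes f :: "complex \<Rightarrow> real \<Rightarrow> complex" and w :: "real \<Rightarrow> complex"
  assumes cont: "continuous_on (ball 0 1 \<times> {0..}) (\<lambda>(z,t). f z t)"
  and hol: "\<And>t. t \<ge> 0 \<Longrightarrow> (\<lambda>z. f z t) holomorphic_on ball 0 1"
  and dt: "\<And>z t. z \<in> ball 0 1 \<Longrightarrow> t \<ge> 0 \<Longrightarrow> ((\<lambda>s. f z s) has_vector_derivative Dt z t) (at t within {0..})"
  and wd: "(w has_vector_derivative w') (at s within S)"
  and S: "S \<subseteq> {0..}" "s \<in> S"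
  and wS: "\<And>s. s \<in> S \<Longrightarrow> w s \<in> ball 0 1"
  shows "((\<lambda>s. f (w s) s) has_vector_derivative (deriv (\<lambda>v. f v s) (w s) * w' + Dt (w s) s)) (at s within S)"
proof -
  have s0: "s \<ge> 0" and ws: "w s \<in> ball 0 1" using S wS by auto
  have dc: "continuous_on ({0..} \<times> ball 0 1) (\<lambda>(t,z). deriv (\<lambda>w. f w t) z)"
    by (rule deriv_cont[OF cont hol])
  have J: "((\<lambda>(x,y). f y x) has_derivative (\<lambda>(tx,ty). tx *\<^sub>R Dt (w s) s + blinfun_apply (blinfun_mult_right (deriv (\<lambda>v. f v s) (w s))) ty))
            (at (s, w s) within {0..} \<times> ball 0 1)"
  proof (rule has_derivative_partialsI)
    show "((\<lambda>x. f (w s) x) has_derivative (\<lambda>h. h *\<^sub>R Dt (w s) s)) (at s within {0..})"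
      using dt[OF ws s0] by (simp add: has_vector_derivative_def)
    show "((\<lambda>y. f y x) has_derivative blinfun_apply (blinfun_mult_right (deriv (\<lambda>v. f v x) y))) (at y within ball 0 1)"
      if "x \<in> {0..}" "y \<in> ball 0 1" for x y
    proof -
      have "(\<lambda>z. f z x) field_differentiable at y"
        using hol[of x] that holomorphic_on_imp_differentiable_at[of _ "ball 0 1"] by auto
      then have "((\<lambda>z. f z x) has_field_derivative deriv (\<lambda>v. f v x) y) (at y)"
        by (simp add: DERIV_deriv_iff_field_differentiable)
      then show ?thesis
        by (auto simp: has_field_derivative_def intro: has_derivative_at_withinI)
    qed
    have mem: "(s, w s) \<in> {0..} \<times> ball 0 1" using s0 ws by simp
    have "continuous (at (s, w s) within {0..} \<times> ball 0 1) (\<lambda>(t,z). deriv (\<lambda>w. f w t) z)"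
      using dc mem unfolding continuous_on_eq_continuous_within by blast
    then have "continuous (at (s, w s) within {0..} \<times> ball 0 1)
        (\<lambda>x. blinfun_mult_right ((\<lambda>(t,z). deriv (\<lambda>w. f w t) z) x))"
      by (rule bounded_linear.continuous[OF bounded_linear_blinfun_mult_right])
    then show "continuous (at (s, w s) within {0..} \<times> ball 0 1) (\<lambda>(x, y). blinfun_mult_right (deriv (\<lambda>v. f v x) y))"
      by (simp add: case_prod_beta')
    show "w s \<in> ball 0 1" by (rule ws)
    show "convex (ball (0::complex) 1)" by (rule convex_ball)
  qed
  have g: "((\<lambda>t. (t, w t)) has_derivative (\<lambda>h. (h, h *\<^sub>R w'))) (at s within S)"
    using wd by (auto intro!: derivative_eq_intros simp: has_vector_derivative_def)
  have J2: "((\<lambda>(x,y). f y x) has_derivative (\<lambda>(tx,ty). tx *\<^sub>R Dt (w s) s + blinfun_apply (blinfun_mult_right (deriv (\<lambda>v. f v s) (w s))) ty))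
            (at (s, w s) within (\<lambda>t. (t, w t)) ` S)"
    by (rule has_derivative_subset[OF J]) (use S wS in auto)
  have "((\<lambda>t. (\<lambda>(x,y). f y x) (t, w t)) has_derivative
     (\<lambda>h. (\<lambda>(tx,ty). tx *\<^sub>R Dt (w s) s + blinfun_apply (blinfun_mult_right (deriv (\<lambda>v. f v s) (w s))) ty) (h, h *\<^sub>R w'))) (at s within S)"
    by (rule has_derivative_in_compose[OF g]) (use J2 in simp)
  then have H: "((\<lambda>t. f (w t) t) has_derivative
      (\<lambda>h. h *\<^sub>R Dt (w s) s + deriv (\<lambda>v. f v s) (w s) * (h *\<^sub>R w'))) (at s within S)"
    by simp
  show ?thesis unfolding has_vector_derivative_def
    by (rule has_derivative_eq_rhs[OF H]) (simp add: fun_eq_iff algebra_simps scaleR_conv_of_real)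
qed

lemma Re_p_nonneg:
  fixes e z :: complex
  assumes "norm e = 1" "norm z < 1"
  shows "Re ((e + z) / (e - z)) \<ge> 0"
proof -
  have "Re (e + z) * Re (e - z) + Im (e + z) * Im (e - z) = (norm e)^2 - (norm z)^2"
    unfolding cmod_power2 by (simp add: algebra_simps power2_eq_square)
  also have "\<dots> \<ge> 0" using assms by (simp add: abs_square_le_1 power_le_one)
  finally show ?thesis unfolding Re_divide' by simp
qed

lemma Re_cnj_mult_self: "Re (cnj w * w) = (norm w)^2"
  unfolding cmod_power2 by (simp add: power2_eq_square)

lemma max_point:
  fixes F :: "complex \<Rightarrow> complex"
  assumes hol: "F holomorphic_on ball 0 1" and r: "r < 1"
    and z0: "z0 \<in> cball 0 r" and mx: "\<And>z. z \<in> cball 0 r \<Longrightarrow> norm (F z) \<le> norm (F z0)"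
  shows "Im (cnj (F z0) * z0 * deriv F z0) = 0 \<and> Re (cnj (F z0) * z0 * deriv F z0) \<ge> 0"
proof -
  define c where "c = cnj (F z0) * z0 * deriv F z0"
  define G where "G = (\<lambda>\<zeta>. cnj (F z0) * F \<zeta>)"
  have z0b: "z0 \<in> ball 0 1" using z0 r by simp
  have dF: "(F has_field_derivative deriv F z0) (at z0)"
    using hol z0b holomorphic_on_imp_differentiable_at[of F "ball 0 1"]
    by (simp add: DERIV_deriv_iff_field_differentiable)
  have Gle: "Re (G \<zeta>) \<le> Re (G z0)" if "\<zeta> \<in> cball 0 r" for \<zeta>
  proof -
    have "Re (G \<zeta>) \<le> norm (G \<zeta>)" by (rule complex_Re_le_cmod)
    also have "\<dots> = norm (F z0) * norm (F \<zeta>)" by (simp add: G_def norm_mult)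
    also have "\<dots> \<le> norm (F z0) * norm (F z0)" using mx[OF that] by (simp add: mult_left_mono)
    also have "\<dots> = Re (G z0)" unfolding G_def using Re_cnj_mult_self[of "F z0"] by (simp add: power2_eq_square)
    finally show ?thesis .
  qed
  have d1: "((\<lambda>\<theta>. Re (G (z0 * exp (\<i> * of_real \<theta>)))) has_field_derivative Re (\<i> * c)) (at 0)"
  proof -
    have dg: "((\<lambda>x. z0 * exp (\<i> * x)) has_field_derivative z0 * \<i>) (at 0)"
      by (auto intro!: derivative_eq_intros)
    have dG': "(G has_field_derivative cnj (F z0) * deriv F z0) (at ((\<lambda>x. z0 * exp (\<i> * x)) 0))"
      using DERIV_cmult[OF dF, of "cnj (F z0)"] by (simp add: G_def)
    have "((G \<circ> (\<lambda>x. z0 * exp (\<i> * x))) has_field_derivative (cnj (F z0) * deriv F z0) * (z0 * \<i>)) (at (of_real (0::real)))"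
      using DERIV_chain[OF dG' dg] by simp
    then have "((\<lambda>x. (G \<circ> (\<lambda>x. z0 * exp (\<i> * x))) (of_real x)) has_vector_derivative (cnj (F z0) * deriv F z0) * (z0 * \<i>)) (at 0)"
      by (rule has_vector_derivative_real_field)
    then have "((\<lambda>x. Re ((G \<circ> (\<lambda>x. z0 * exp (\<i> * x))) (of_real x))) has_field_derivative Re ((cnj (F z0) * deriv F z0) * (z0 * \<i>))) (at 0)"
      by (rule has_field_derivative_Re)
    then show ?thesis by (simp add: c_def algebra_simps)
  qed
  have "Re (\<i> * c) = 0"
  proof (rule DERIV_local_max[OF d1, of 1])
    show "\<forall>y. \<bar>0 - y\<bar> < 1 \<longrightarrow> Re (G (z0 * exp (\<i> * of_real y))) \<le> Re (G (z0 * exp (\<i> * of_real 0)))"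
    proof (intro allI impI)
      fix y :: real
      have "z0 * exp (\<i> * of_real y) \<in> cball 0 r" using z0 by (simp add: norm_mult)
      then show "Re (G (z0 * exp (\<i> * of_real y))) \<le> Re (G (z0 * exp (\<i> * of_real 0)))"
        using Gle by simp
    qed
  qed simp
  then have im: "Im c = 0" by simp
  have d2: "((\<lambda>s. Re (G (z0 * (1 - of_real s)))) has_field_derivative Re (- c)) (at 0)"
  proof -
    have dg: "((\<lambda>x. z0 * (1 - x)) has_field_derivative - z0) (at 0)"
      by (auto intro!: derivative_eq_intros)
    have dG': "(G has_field_derivative cnj (F z0) * deriv F z0) (at ((\<lambda>x. z0 * (1 - x)) 0))"
      using DERIV_cmult[OF dF, of "cnj (F z0)"] by (simp add: G_def)
    have "((G \<circ> (\<lambda>x. z0 * (1 - x))) has_field_derivative (cnj (F z0) * deriv F z0) * (- z0)) (at (of_real (0::real)))"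
      using DERIV_chain[OF dG' dg] by simp
    then have "((\<lambda>x. (G \<circ> (\<lambda>x. z0 * (1 - x))) (of_real x)) has_vector_derivative (cnj (F z0) * deriv F z0) * (- z0)) (at 0)"
      by (rule has_vector_derivative_real_field)
    then have "((\<lambda>x. Re ((G \<circ> (\<lambda>x. z0 * (1 - x))) (of_real x))) has_field_derivative Re ((cnj (F z0) * deriv F z0) * (- z0))) (at 0)"
      by (rule has_field_derivative_Re)
    then show ?thesis by (simp add: c_def algebra_simps)
  qed
  have re: "Re c \<ge> 0"
  proof (rule ccontr)
    assume "\<not> Re c \<ge> 0"
    then have "0 < Re (- c)" by simp
    from DERIV_pos_inc_right[OF d2 this] obtain d where d: "d > 0"
      and inc: "\<And>h. h > 0 \<Longrightarrow> h < d \<Longrightarrow> Re (G (z0 * (1 - of_real 0))) < Re (G (z0 * (1 - of_real (0 + h))))"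
      by blast
    define h where "h = min (d/2) (1/2)"
    have h: "h > 0" "h < d" "h \<le> 1" using d by (auto simp: h_def)
    have e1: "1 - complex_of_real h = complex_of_real (1 - h)" by simp
    have "norm (z0 * (1 - of_real h)) = norm z0 * (1 - h)"
      using h unfolding e1 norm_mult norm_of_real by simp
    also have "\<dots> \<le> norm z0" using h by (simp add: mult_left_le)
    finally have "z0 * (1 - of_real h) \<in> cball 0 r" using z0 by simp
    then have "Re (G (z0 * (1 - of_real h))) \<le> Re (G z0)" by (rule Gle)
    with inc[OF h(1) h(2)] show False by simp
  qed
  show ?thesis using im re by (simp add: c_def)
qed

lemma deriv_cont2:
  fixes f :: "complex \<Rightarrow> real \<Rightarrow> complex"
  assumes cont: "continuous_on (ball 0 1 \<times> {0..}) (\<lambda>(z,t). f z t)"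
  and hol: "\<And>t. t \<ge> 0 \<Longrightarrow> (\<lambda>z. f z t) holomorphic_on ball 0 1"
  shows "continuous_on (ball 0 1 \<times> {0..}) (\<lambda>x. deriv (\<lambda>w. f w (snd x)) (fst x))"
proof -
  have "continuous_on (ball 0 1 \<times> {0..}) ((\<lambda>(t,z). deriv (\<lambda>w. f w t) z) \<circ> prod.swap)"
    by (rule continuous_on_compose[OF continuous_on_swap continuous_on_subset[OF deriv_cont[OF cont hol]]]) auto
  then show ?thesis by (simp add: o_def case_prod_unfold)
qed

lemma loewner_bound:
  fixes f :: "complex \<Rightarrow> real \<Rightarrow> complex"
  assumes sol: "loewner_sol a f" and r: "0 \<le> r" "r < 1"
  shows "\<forall>z\<in>cball 0 r. \<forall>t\<ge>0. norm (f z t) \<le> r"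
proof (rule ccontr)
  have cont: "continuous_on (ball 0 1 \<times> {0..}) (\<lambda>(z,t). f z t)"
   and hol: "\<And>t. t \<ge> 0 \<Longrightarrow> (\<lambda>z. f z t) holomorphic_on ball 0 1"
   and init: "\<And>z. z \<in> ball 0 1 \<Longrightarrow> f z 0 = z"
   and pde: "\<And>z t. z \<in> ball 0 1 \<Longrightarrow> t \<ge> 0 \<Longrightarrow> ((\<lambda>s. f z s) has_vector_derivative
           (- z * deriv (\<lambda>w. f w t) z *
              ((exp (\<i> * of_real (a * t)) + z) / (exp (\<i> * of_real (a * t)) - z))))
        (at t within {0..})"
    using sol unfolding loewner_sol_def by auto
  define p where "p = (\<lambda>z t. (exp (\<i> * of_real (a * t)) + z) / (exp (\<i> * of_real (a * t)) - z))"
  define Dt where "Dt = (\<lambda>z t. - z * deriv (\<lambda>w. f w t) z * p z t)"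
  define N where "N = (\<lambda>z t. (norm (f z t))^2)"
  define g where "g = (\<lambda>z t. 2 * Re (cnj (f z t) * Dt z t))"
  have cb: "cball 0 r \<subseteq> ball (0::complex) 1" using r by auto
  have cb2: "cball 0 r \<times> {0..} \<subseteq> ball (0::complex) 1 \<times> {0::real..}" using cb by auto
  have contf: "continuous_on (cball 0 r \<times> {0..}) (\<lambda>x. f (fst x) (snd x))"
    using continuous_on_subset[OF cont cb2] by (simp add: case_prod_unfold)
  have contd: "continuous_on (cball 0 r \<times> {0..}) (\<lambda>x. deriv (\<lambda>w. f w (snd x)) (fst x))"
    using continuous_on_subset[OF deriv_cont2[OF cont hol] cb2] by simp
  have nz: "exp (\<i> * of_real (a * snd x)) - fst x \<noteq> 0" if "x \<in> cball 0 r \<times> {0..}" for x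
  proof
    assume "exp (\<i> * of_real (a * snd x)) - fst x = 0"
    then have "norm (fst x) = 1" by (metis eq_iff_diff_eq_0 norm_exp_i_times)
    with that r show False by auto
  qed
  have contp: "continuous_on (cball 0 r \<times> {0..}) (\<lambda>x. p (fst x) (snd x))"
    unfolding p_def using nz by (intro continuous_intros) auto
  have contN: "continuous_on (cball 0 r \<times> {0..}) (\<lambda>x. N (fst x) (snd x))"
    unfolding N_def by (intro continuous_intros contf)
  have contg: "continuous_on (cball 0 r \<times> {0..}) (\<lambda>x. g (fst x) (snd x))"
    unfolding g_def Dt_def by (intro continuous_intros contf contd contp)
  have contNt: "continuous_on {0..} (\<lambda>t. N z t)" if "z \<in> cball 0 r" for z
  proof -
    have "continuous_on {0..} ((\<lambda>x. N (fst x) (snd x)) \<circ> (\<lambda>t. (z,t)))"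
      by (rule continuous_on_compose[OF _ continuous_on_subset[OF contN]]) (use that in \<open>auto intro!: continuous_intros\<close>)
    then show ?thesis by (simp add: o_def)
  qed
  have derivN: "((\<lambda>s. N z s) has_real_derivative g z t) (at t)" if "z \<in> cball 0 r" "t > 0" for z t
  proof -
    have "((\<lambda>s. f z s) has_vector_derivative Dt z t) (at t within {0..})"
      using pde[of z t] that cb unfolding Dt_def p_def by auto
    then have "((\<lambda>s. f z s) has_vector_derivative Dt z t) (at t within {0<..})"
      by (rule has_vector_derivative_within_subset) auto
    then have d: "((\<lambda>s. f z s) has_vector_derivative Dt z t) (at t)"
      using at_within_open[of t "{0<..}"] that by simp
    have "((\<lambda>s. (Re (f z s))^2 + (Im (f z s))^2) has_real_derivative
          (2 * Re (f z t) * Re (Dt z t) + 2 * Im (f z t) * Im (Dt z t))) (at t)"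
      by (rule derivative_eq_intros has_field_derivative_Re[OF d] has_field_derivative_Im[OF d] refl | simp)+
    then show ?thesis unfolding N_def g_def cmod_power2 by (simp add: algebra_simps)
  qed
  assume "\<not> (\<forall>z\<in>cball 0 r. \<forall>t\<ge>0. norm (f z t) \<le> r)"
  then obtain z1 t1 where z1: "z1 \<in> cball 0 r" and t1: "t1 \<ge> 0" and big: "norm (f z1 t1) > r"
    by auto
  have N0: "N z 0 \<le> r^2" if "z \<in> cball 0 r" for z
    using that cb init[of z] r unfolding N_def by (auto intro!: power_mono)
  have t1p: "t1 > 0"
  proof (rule ccontr)
    assume "\<not> t1 > 0"
    then have "t1 = 0" using t1 by simp
    then show False using big init[of z1] z1 cb by auto
  qed
  have N1: "N z1 t1 > r^2" unfolding N_def using big r by (simp add: power_strict_mono)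
  define \<epsilon> where "\<epsilon> = (N z1 t1 - r^2) / (2 * t1)"
  have \<epsilon>: "\<epsilon> > 0" using N1 t1p by (simp add: \<epsilon>_def)
  have N1': "N z1 t1 > r^2 + \<epsilon> * t1" using N1 t1p by (simp add: \<epsilon>_def field_simps)
  define S where "S = {t \<in> {0..t1}. \<forall>z\<in>cball 0 r. N z t \<le> r^2 + \<epsilon> * t}"
  have "S = {0..t1} \<inter> (\<Inter>z\<in>cball 0 r. {t \<in> {0..t1}. N z t \<le> r^2 + \<epsilon> * t})"
    unfolding S_def by auto
  moreover have "closed {t \<in> {0..t1}. N z t \<le> r^2 + \<epsilon> * t}" if "z \<in> cball 0 r" for z
    by (rule continuous_on_closed_Collect_le) (auto intro!: continuous_intros continuous_on_subset[OF contNt[OF that]])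
  ultimately have clS: "closed S" by (auto intro!: closed_INT)
  have S0: "0 \<in> S" unfolding S_def using N0 t1 by auto
  have bdS: "bdd_above S" unfolding S_def by (auto intro: bdd_aboveI[of _ t1])
  define ts where "ts = Sup S"
  have tsS: "ts \<in> S" unfolding ts_def using closed_contains_Sup[OF _ bdS clS] S0 by auto
  have ts0: "ts \<ge> 0" and tst1: "ts \<le> t1" using tsS unfolding S_def by auto
  have t1S: "t1 \<notin> S"
  proof
    assume "t1 \<in> S"
    then have "N z1 t1 \<le> r^2 + \<epsilon> * t1" using z1 unfolding S_def by blast
    with N1' show False by simp
  qed
  have tslt: "ts < t1" using tst1 tsS t1S by (cases "ts = t1") auto
  have notS: "t \<notin> S" if "t > ts" for t
    using that cSup_upper[OF _ bdS] unfolding ts_def by force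
  define h where "h = (\<lambda>n::nat. (t1 - ts) / real (Suc n))"
  have hpos: "h n > 0" for n using tslt by (simp add: h_def)
  have hle: "ts + h n \<le> t1" for n
  proof -
    have "(t1 - ts) / real (Suc n) \<le> t1 - ts" using tslt by (simp add: divide_le_eq)
    then show ?thesis by (simp add: h_def)
  qed
  have "\<forall>n. \<exists>z. z \<in> cball 0 r \<and> N z (ts + h n) > r^2 + \<epsilon> * (ts + h n)"
  proof
    fix n
    have "ts + h n \<notin> S" using notS hpos[of n] by simp
    then show "\<exists>z. z \<in> cball 0 r \<and> N z (ts + h n) > r^2 + \<epsilon> * (ts + h n)"
      using hle[of n] ts0 hpos[of n] unfolding S_def by (auto simp: not_le)
  qed
  then obtain zs where zs: "\<And>n. zs n \<in> cball 0 r" and zsN: "\<And>n. N (zs n) (ts + h n) > r^2 + \<epsilon> * (ts + h n)"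
    by metis
  have tsN: "N z ts \<le> r^2 + \<epsilon> * ts" if "z \<in> cball 0 r" for z
    using tsS that unfolding S_def by auto
  have "\<forall>n. \<exists>\<tau>. ts < \<tau> \<and> \<tau> < ts + h n \<and> g (zs n) \<tau> > \<epsilon>"
  proof
    fix n
    have "\<exists>l z. ts < z \<and> z < ts + h n \<and> DERIV (\<lambda>s. N (zs n) s) z :> l \<and>
             N (zs n) (ts + h n) - N (zs n) ts = (ts + h n - ts) * l"
    proof (rule MVT)
      show "ts < ts + h n" using hpos[of n] by simp
      show "continuous_on {ts..ts + h n} (\<lambda>s. N (zs n) s)"
        by (rule continuous_on_subset[OF contNt[OF zs]]) (use ts0 in auto)
      show "(\<lambda>s. N (zs n) s) differentiable (at x)" if "ts < x" "x < ts + h n" for x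
        using derivN[OF zs, of x] that ts0 real_differentiable_def by force
    qed
    then obtain l \<tau> where \<tau>: "ts < \<tau>" "\<tau> < ts + h n" and dl: "DERIV (\<lambda>s. N (zs n) s) \<tau> :> l"
      and eq: "N (zs n) (ts + h n) - N (zs n) ts = (ts + h n - ts) * l" by blast
    have "l = g (zs n) \<tau>" using DERIV_unique[OF dl derivN[OF zs]] \<tau> ts0 by simp
    moreover have "h n * l > h n * \<epsilon>"
      using eq zsN[of n] tsN[OF zs[of n]] by (simp add: algebra_simps)
    then have "l > \<epsilon>" using hpos[of n] by (simp add: mult_less_cancel_left_pos)
    ultimately show "\<exists>\<tau>. ts < \<tau> \<and> \<tau> < ts + h n \<and> g (zs n) \<tau> > \<epsilon>" using \<tau> by blast
  qed
  then obtain \<tau>s where \<tau>s: "\<And>n. ts < \<tau>s n" "\<And>n. \<tau>s n < ts + h n" and g\<tau>: "\<And>n. g (zs n) (\<tau>s n) > \<epsilon>"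
    by metis
  have "seq_compact (cball (0::complex) r)" by (rule compact_imp_seq_compact) simp
  then obtain l \<sigma> where l: "l \<in> cball 0 r" and \<sigma>: "strict_mono \<sigma>" and lim: "(zs \<circ> \<sigma>) \<longlonglongrightarrow> l"
    using zs by (metis seq_compactE)
  have h0: "h \<longlonglongrightarrow> 0" unfolding h_def by (rule LIMSEQ_Suc[OF lim_const_over_n])
  then have h0\<sigma>: "(h \<circ> \<sigma>) \<longlonglongrightarrow> 0" using \<sigma> by (rule LIMSEQ_subseq_LIMSEQ)
  have "(\<lambda>n. ts + (h \<circ> \<sigma>) n) \<longlonglongrightarrow> ts + 0" by (intro tendsto_intros h0\<sigma>)
  then have th: "(\<lambda>n. ts + h (\<sigma> n)) \<longlonglongrightarrow> ts" by simp
  have t\<tau>: "(\<lambda>n. \<tau>s (\<sigma> n)) \<longlonglongrightarrow> ts"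
  proof (rule tendsto_sandwich[OF _ _ tendsto_const th])
    show "\<forall>\<^sub>F n in sequentially. ts \<le> \<tau>s (\<sigma> n)"
      by (rule always_eventually) (use \<tau>s(1) in \<open>auto intro: less_imp_le\<close>)
    show "\<forall>\<^sub>F n in sequentially. \<tau>s (\<sigma> n) \<le> ts + h (\<sigma> n)"
      by (rule always_eventually) (use \<tau>s(2) in \<open>auto intro: less_imp_le\<close>)
  qed
  have lim1: "(\<lambda>n. (zs (\<sigma> n), \<tau>s (\<sigma> n))) \<longlonglongrightarrow> (l, ts)"
    using lim t\<tau> by (intro tendsto_Pair) (auto simp: o_def)
  have lim2: "(\<lambda>n. (zs (\<sigma> n), ts + h (\<sigma> n))) \<longlonglongrightarrow> (l, ts)"
    using lim th by (intro tendsto_Pair) (auto simp: o_def)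
  have "(\<lambda>n. (\<lambda>x. g (fst x) (snd x)) (zs (\<sigma> n), \<tau>s (\<sigma> n))) \<longlonglongrightarrow> (\<lambda>x. g (fst x) (snd x)) (l, ts)"
  proof (rule continuous_on_tendsto_compose[OF contg lim1])
    have "\<forall>n. 0 \<le> \<tau>s n" using \<tau>s(1) ts0 by (meson less_imp_le order_trans)
    then show "\<forall>\<^sub>F n in sequentially. (zs (\<sigma> n), \<tau>s (\<sigma> n)) \<in> cball 0 r \<times> {0..}"
      using zs by (intro always_eventually) auto
  qed (use l ts0 in auto)
  then have "(\<lambda>n. g (zs (\<sigma> n)) (\<tau>s (\<sigma> n))) \<longlonglongrightarrow> g l ts" by simp
  then have "g l ts \<ge> \<epsilon>"
    by (rule LIMSEQ_le_const) (use g\<tau> in \<open>auto intro: less_imp_le\<close>)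
  have limN: "(\<lambda>n. (\<lambda>x. N (fst x) (snd x)) (zs (\<sigma> n), ts + h (\<sigma> n))) \<longlonglongrightarrow> (\<lambda>x. N (fst x) (snd x)) (l, ts)"
  proof (rule continuous_on_tendsto_compose[OF contN lim2])
    have "\<forall>n. 0 \<le> ts + h n" using hpos ts0 by (meson add_nonneg_nonneg less_imp_le)
    then show "\<forall>\<^sub>F n in sequentially. (zs (\<sigma> n), ts + h (\<sigma> n)) \<in> cball 0 r \<times> {0..}"
      using zs by (intro always_eventually) auto
  qed (use l ts0 in auto)
  have "N (zs n) (ts + h n) \<ge> r^2 + \<epsilon> * ts" for n
    using zsN[of n] hpos[of n] \<epsilon> by (smt (verit) mult_pos_pos distrib_left)
  moreover have "(\<lambda>n. N (zs (\<sigma> n)) (ts + h (\<sigma> n))) \<longlonglongrightarrow> N l ts" using limN by simp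
  ultimately have Nl: "N l ts \<ge> r^2 + \<epsilon> * ts"
    by (intro LIMSEQ_le_const[of "\<lambda>n. N (zs (\<sigma> n)) (ts + h (\<sigma> n))"]) auto
  have mx: "norm (f z ts) \<le> norm (f l ts)" if "z \<in> cball 0 r" for z
  proof (rule power2_le_imp_le)
    show "(norm (f z ts))^2 \<le> (norm (f l ts))^2" using tsN[OF that] Nl unfolding N_def by linarith
  qed simp
  have mp: "Im (cnj (f l ts) * l * deriv (\<lambda>w. f w ts) l) = 0 \<and> Re (cnj (f l ts) * l * deriv (\<lambda>w. f w ts) l) \<ge> 0"
    by (rule max_point[where F = "\<lambda>w. f w ts", OF hol[OF ts0] r(2) l mx])
  have Rp: "Re (p l ts) \<ge> 0" unfolding p_def using l r by (intro Re_p_nonneg) auto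
  define c where "c = cnj (f l ts) * l * deriv (\<lambda>w. f w ts) l"
  have "g l ts = - 2 * Re (c * p l ts)" by (simp add: g_def Dt_def c_def algebra_simps)
  also have "\<dots> = - 2 * (Re c * Re (p l ts))" using mp by (simp add: c_def)
  also have "\<dots> \<le> 0" using mp Rp by (simp add: c_def)
  finally show False using \<open>g l ts \<ge> \<epsilon>\<close> \<epsilon> by simp
qed

lemma Ln_bound:
  fixes x :: complex
  assumes x: "norm x \<le> r" and r: "r < 1"
  shows "norm (Ln (1 - x)) \<le> pi - ln (1 - r)"
proof -
  have r0: "0 \<le> r" using x norm_ge_zero order_trans by blast
  have n1: "norm (1 - x) \<ge> 1 - r" using norm_triangle_ineq2[of 1 x] x by simp
  have n2: "norm (1 - x) \<le> 1 + r" using norm_triangle_ineq4[of 1 x] x by simp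
  have nz: "1 - x \<noteq> 0" using n1 r by auto
  have l1: "ln (norm (1-x)) \<ge> ln (1 - r)" using n1 r by (subst ln_le_cancel_iff) auto
  have "ln (norm (1-x)) \<le> ln (1 + r)" using n2 nz r0 by simp
  also have "ln (1 + r) \<le> r" by (rule ln_add_one_self_le_self[OF r0])
  also have "r \<le> - ln (1 - r)" using ln_le_minus_one[of "1-r"] r by simp
  finally have l2: "ln (norm (1-x)) \<le> - ln (1 - r)" .
  have "Re (1 - x) > 0" using complex_Re_le_cmod[of x] x r by simp
  then have "\<bar>Im (Ln (1 - x))\<bar> < pi/2" by (rule Re_Ln_pos_lt_imp)
  moreover have "\<bar>Re (Ln (1 - x))\<bar> \<le> - ln (1 - r)" using l1 l2 nz by simp
  ultimately show ?thesis using cmod_le[of "Ln (1 - x)"] pi_gt_zero by linarith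
qed

lemma alg1:
  fixes c k v u L :: complex
  assumes ck: "c * (1 - k) = -2" and nz: "1 - v * u \<noteq> 0"
  shows "v + c * (v * L + inverse (1 - v * u) * (0 - (v * u + - k * u * v)) * v) =
         v + c * (v * L) + 2 * v^2 * u / (1 - v * u)"
proof -
  have h: "c * (inverse (1 - v * u) * (0 - (v * u + - k * u * v)) * v) = (c * (1 - k)) * (- (v^2 * u) / (1 - v * u))"
    using nz by (simp add: field_simps power2_eq_square)
  also have "\<dots> = 2 * v^2 * u / (1 - v * u)" using ck by simp
  finally show ?thesis by (simp add: distrib_left add.assoc)
qed

lemma alg2:
  fixes e u v w d :: complex
  assumes eu: "e * u = 1" and n1: "1 - v * u \<noteq> 0" and n2: "1 - w * u \<noteq> 0" and n3: "e - w \<noteq> 0"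
  shows "d * (w + 2 * v^2 * u / (1 - v * u)) + (- w * d * ((e + w) / (e - w))) =
         2 * u * d * (v - w) * (v + w - v * w * u) / ((1 - v * u) * (1 - w * u))"
proof -
  have u0: "u \<noteq> 0" using eu by auto
  have e: "e = 1 / u" using eu u0 by (simp add: field_simps)
  have p: "(e + w) / (e - w) = (1 + w * u) / (1 - w * u)"
    using u0 n2 n3 unfolding e by (simp add: field_simps)
  show ?thesis unfolding p using n1 n2
    by (simp add: field_simps power2_eq_square)
qed

lemma key_estimate:
  fixes f :: "complex \<Rightarrow> real \<Rightarrow> complex"
  assumes sol: "loewner_sol a f" and r: "0 \<le> r" "r < 1" and t: "t \<ge> 0" and z: "z \<in> cball 0 r"
  and a: "a > 0" and aL: "2 * (pi - ln (1 - r)) / a \<le> (1 - r)/2"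
  shows "norm (f z t - z * exp (- of_real t)) \<le>
     (4/(1-r) + 1 + 6 * t * (4/(1-r)) / ((1-r)/2)^2) * (2 * (pi - ln (1 - r)) / a)"
proof -
  have cont: "continuous_on (ball 0 1 \<times> {0..}) (\<lambda>(z,t). f z t)"
   and hol: "\<And>t. t \<ge> 0 \<Longrightarrow> (\<lambda>z. f z t) holomorphic_on ball 0 1"
   and init: "\<And>z. z \<in> ball 0 1 \<Longrightarrow> f z 0 = z"
   and pde: "\<And>z t. z \<in> ball 0 1 \<Longrightarrow> t \<ge> 0 \<Longrightarrow> ((\<lambda>s. f z s) has_vector_derivative
           (- z * deriv (\<lambda>w. f w t) z *
              ((exp (\<i> * of_real (a * t)) + z) / (exp (\<i> * of_real (a * t)) - z))))
        (at t within {0..})"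
    using sol unfolding loewner_sol_def by auto
  define \<Lambda> where "\<Lambda> = pi - ln (1 - r)"
  define \<Delta> where "\<Delta> = 2 * \<Lambda> / a"
  define r' where "r' = (1 + r) / 2"
  define B where "B = 4 / (1 - r)"
  have "ln (1 - r) \<le> 0" using r by (subst ln_le_zero_iff) auto
  then have \<Lambda>0: "\<Lambda> \<ge> 0" unfolding \<Lambda>_def using pi_gt_zero by linarith
  have \<Delta>0: "\<Delta> \<ge> 0" using \<Lambda>0 a by (simp add: \<Delta>_def)
  have \<Delta>le: "\<Delta> \<le> (1 - r)/2" using aL by (simp add: \<Delta>_def \<Lambda>_def)
  have r'1: "r' < 1" and rr': "r \<le> r'" and r'0: "0 \<le> r'" using r by (auto simp: r'_def)
  have B0: "0 \<le> B" using r by (simp add: B_def)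
  have omr': "1 - r' = (1 - r)/2" by (simp add: r'_def field_simps)
  have fb: "norm (f \<zeta> s) \<le> 1" if "\<zeta> \<in> ball 0 1" "s \<ge> 0" for \<zeta> s
  proof -
    have "norm (f \<zeta> s) \<le> norm \<zeta>"
      using loewner_bound[OF sol norm_ge_zero, of \<zeta>] that by auto
    then show ?thesis using that by simp
  qed
  have db: "norm (deriv (\<lambda>w. f w s) \<zeta>) \<le> B" if "\<zeta> \<in> cball 0 r'" "s \<ge> 0" for \<zeta> s
  proof -
    define \<rho> where "\<rho> = (1 - r) / 4"
    have \<rho>: "\<rho> > 0" using r by (simp add: \<rho>_def)
    have sub: "cball \<zeta> \<rho> \<subseteq> ball 0 1"
    proof
      fix w assume "w \<in> cball \<zeta> \<rho>"
      then have "norm w \<le> norm \<zeta> + \<rho>" using norm_triangle_ineq2[of w \<zeta>]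
        by (simp add: dist_norm norm_minus_commute)
      moreover have "norm \<zeta> \<le> (1+r)/2" using that(1) by (simp add: r'_def)
      ultimately have "norm w < 1" using r \<rho>_def by argo
      then show "w \<in> ball 0 1" by simp
    qed
    have "norm ((deriv ^^ 1) (\<lambda>w. f w s) \<zeta>) \<le> (fact 1) * 1 / \<rho>^1"
    proof (rule Cauchy_inequality)
      show "(\<lambda>w. f w s) holomorphic_on ball \<zeta> \<rho>"
        using hol[OF that(2)] sub ball_subset_cball holomorphic_on_subset by blast
      show "continuous_on (cball \<zeta> \<rho>) (\<lambda>w. f w s)"
        using hol[OF that(2)] sub holomorphic_on_imp_continuous_on continuous_on_subset by blast
      show "0 < \<rho>" by (rule \<rho>)
      fix w assume "norm (\<zeta> - w) = \<rho>"
      then have "w \<in> ball 0 1" using sub by (auto simp: dist_norm)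
      then show "norm (f w s) \<le> 1" using fb that by auto
    qed
    then show ?thesis by (simp add: B_def \<rho>_def)
  qed
  define cc where "cc = - 2 / (1 - \<i> * of_real a)"
  define V where "V = (\<lambda>\<sigma>::complex. z * exp (\<sigma> - of_real t))"
  define U where "U = (\<lambda>\<sigma>::complex. exp (- (\<i> * of_real a * \<sigma>)))"
  define W where "W = (\<lambda>\<sigma>. V \<sigma> + cc * (V \<sigma> * Ln (1 - V \<sigma> * U \<sigma>)))"
  define W' where "W' = (\<lambda>\<sigma>. W \<sigma> + 2 * (V \<sigma>)^2 * U \<sigma> / (1 - V \<sigma> * U \<sigma>))"
  have nza: "1 - \<i> * of_real a \<noteq> 0"
  proof
    assume "1 - \<i> * of_real a = 0"
    then have "Re (1 - \<i> * of_real a) = 0" by simp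
    then show False by simp
  qed
  have ccn: "norm cc \<le> 2 / a"
  proof -
    have "a \<le> norm (1 - \<i> * of_real a)" using abs_Im_le_cmod[of "1 - \<i> * of_real a"] a by simp
    then show ?thesis using a by (simp add: cc_def norm_divide divide_left_mono)
  qed
  have Vn: "norm (V (of_real s)) \<le> r" if "s \<le> t" for s
  proof -
    have "norm (V (of_real s)) = norm z * exp (s - t)" by (simp add: V_def norm_mult)
    also have "\<dots> \<le> norm z * 1" using that by (intro mult_left_mono) auto
    finally show ?thesis using z by simp
  qed
  have Un: "norm (U (of_real s)) = 1" for s by (simp add: U_def)
  have VUn: "norm (V (of_real s) * U (of_real s)) \<le> r" if "s \<le> t" for s
    using Vn[OF that] Un[of s] by (simp add: norm_mult)
  have \<delta>n: "norm (W (of_real s) - V (of_real s)) \<le> \<Delta>" if "s \<le> t" for s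
  proof -
    have "norm (W (of_real s) - V (of_real s)) = norm cc * norm (V (of_real s)) * norm (Ln (1 - V (of_real s) * U (of_real s)))"
      by (simp add: W_def norm_mult mult.assoc)
    also have "\<dots> \<le> (2 / a) * 1 * \<Lambda>"
      using Ln_bound[OF VUn[OF that] r(2)] Vn[OF that] r ccn less_imp_le[OF a]
      by (intro mult_mono) (auto simp: \<Lambda>_def)
    finally show ?thesis by (simp add: \<Delta>_def)
  qed
  have Wn: "norm (W (of_real s)) \<le> r'" if "s \<le> t" for s
  proof -
    have "norm (W (of_real s)) \<le> norm (V (of_real s)) + norm (W (of_real s) - V (of_real s))"
      by (metis add.commute diff_add_cancel norm_triangle_ineq)
    also have "\<dots> \<le> r + (1 - r)/2" using Vn[OF that] \<delta>n[OF that] \<Delta>le by argo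
    finally show ?thesis by (simp add: r'_def field_simps)
  qed
  have Wb: "W (of_real s) \<in> ball 0 1" if "s \<le> t" for s using Wn[OF that] r'1 by simp
  have dW: "(W has_field_derivative W' (of_real s)) (at (of_real s))" if "s \<le> t" for s
  proof -
    have re: "Re (1 - V (of_real s) * U (of_real s)) > 0"
      using complex_Re_le_cmod[of "V (of_real s) * U (of_real s)"] VUn[OF that] r by simp
    then have nR: "1 - V (of_real s) * U (of_real s) \<notin> \<real>\<^sub>\<le>\<^sub>0"
      by (auto simp: complex_nonpos_Reals_iff)
    have nz: "1 - V (of_real s) * U (of_real s) \<noteq> 0" using re by (metis less_irrefl zero_complex.sel(1))
    define \<sigma> where "\<sigma> = complex_of_real s"
    have dV: "(V has_field_derivative V \<sigma>) (at \<sigma>)"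
      unfolding V_def by (auto intro!: derivative_eq_intros)
    have dU: "(U has_field_derivative (- (\<i> * of_real a)) * U \<sigma>) (at \<sigma>)"
      unfolding U_def by (auto intro!: derivative_eq_intros)
    have dVU: "((\<lambda>x. V x * U x) has_field_derivative V \<sigma> * U \<sigma> + (- (\<i> * of_real a)) * U \<sigma> * V \<sigma>) (at \<sigma>)"
      by (rule DERIV_mult[OF dV dU])
    have d1: "((\<lambda>x. 1 - V x * U x) has_field_derivative 0 - (V \<sigma> * U \<sigma> + (- (\<i> * of_real a)) * U \<sigma> * V \<sigma>)) (at \<sigma>)"
      by (rule DERIV_diff[OF DERIV_const dVU])
    have dL: "((\<lambda>x. Ln (1 - V x * U x)) has_field_derivative
        inverse (1 - V \<sigma> * U \<sigma>) * (0 - (V \<sigma> * U \<sigma> + (- (\<i> * of_real a)) * U \<sigma> * V \<sigma>))) (at \<sigma>)"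
      by (rule DERIV_chain2[OF has_field_derivative_Ln d1]) (use nR in \<open>simp add: \<sigma>_def\<close>)
    have dVL: "((\<lambda>x. V x * Ln (1 - V x * U x)) has_field_derivative
        V \<sigma> * Ln (1 - V \<sigma> * U \<sigma>) + inverse (1 - V \<sigma> * U \<sigma>) * (0 - (V \<sigma> * U \<sigma> + (- (\<i> * of_real a)) * U \<sigma> * V \<sigma>)) * V \<sigma>) (at \<sigma>)"
      by (rule DERIV_mult[OF dV dL])
    have dW0: "((\<lambda>x. V x + cc * (V x * Ln (1 - V x * U x))) has_field_derivative
        V \<sigma> + cc * (V \<sigma> * Ln (1 - V \<sigma> * U \<sigma>) + inverse (1 - V \<sigma> * U \<sigma>) * (0 - (V \<sigma> * U \<sigma> + (- (\<i> * of_real a)) * U \<sigma> * V \<sigma>)) * V \<sigma>)) (at \<sigma>)"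
      by (rule DERIV_add[OF dV DERIV_cmult[OF dVL]])
    have cc1: "cc * (1 - \<i> * of_real a) = -2" unfolding cc_def using nza by (simp add: field_simps)
    have "W' \<sigma> = V \<sigma> + cc * (V \<sigma> * Ln (1 - V \<sigma> * U \<sigma>) + inverse (1 - V \<sigma> * U \<sigma>) * (0 - (V \<sigma> * U \<sigma> + (- (\<i> * of_real a)) * U \<sigma> * V \<sigma>)) * V \<sigma>)"
      unfolding W'_def W_def using alg1[OF cc1, of "V \<sigma>" "U \<sigma>" "Ln (1 - V \<sigma> * U \<sigma>)"] nz
      by (simp add: \<sigma>_def)
    then show ?thesis using dW0 unfolding W_def \<sigma>_def by simp
  qed
  define Dt where "Dt = (\<lambda>\<zeta> s. - \<zeta> * deriv (\<lambda>w. f w s) \<zeta> * ((exp (\<i> * of_real (a * s)) + \<zeta>) / (exp (\<i> * of_real (a * s)) - \<zeta>)))"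
  define \<phi> where "\<phi> = (\<lambda>s. f (W (of_real s)) s)"
  define \<phi>' where "\<phi>' = (\<lambda>s. deriv (\<lambda>v. f v s) (W (of_real s)) * W' (of_real s) + Dt (W (of_real s)) s)"
  have d\<phi>: "(\<phi> has_vector_derivative \<phi>' s) (at s within {0..t})" if s: "s \<in> {0..t}" for s
    unfolding \<phi>_def \<phi>'_def
  proof (rule chain_rule[where Dt = Dt, OF cont hol])
    show "((\<lambda>s. f z s) has_vector_derivative Dt z t) (at t within {0..})" if "z \<in> ball 0 1" "0 \<le> t" for z t
      using pde[OF that] unfolding Dt_def by simp
    show "((\<lambda>s. W (of_real s)) has_vector_derivative W' (of_real s)) (at s within {0..t})"
      using dW[of s] s by (auto intro: has_vector_derivative_real_field)
    show "{0..t} \<subseteq> {0..}" by auto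
    show "s \<in> {0..t}" by (rule s)
    show "W (of_real s) \<in> ball 0 1" if "s \<in> {0..t}" for s using Wb that by auto
  qed auto
  define M where "M = 6 * B * \<Delta> / ((1 - r)/2)^2"
  have \<phi>'b: "norm (\<phi>' s) \<le> M" if s: "s \<in> {0..t}" for s
  proof -
    define v where "v = V (of_real s)"
    define u where "u = U (of_real s)"
    define w where "w = W (of_real s)"
    define e where "e = exp (\<i> * of_real (a * s))"
    define d where "d = deriv (\<lambda>v. f v s) w"
    have st: "s \<le> t" and s0: "s \<ge> 0" using s by auto
    have vn: "norm v \<le> r" using Vn[OF st] by (simp add: v_def)
    have un: "norm u = 1" using Un by (simp add: u_def)
    have wn: "norm w \<le> r'" using Wn[OF st] by (simp add: w_def)
    have vw: "norm (v - w) \<le> \<Delta>" using \<delta>n[OF st] by (simp add: v_def w_def norm_minus_commute)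
    have dn: "norm d \<le> B" unfolding d_def using db[of w s] wn s0 by simp
    have eu: "e * u = 1"
      unfolding e_def u_def U_def using exp_minus_inverse[of "\<i> * of_real a * of_real s"]
      by (simp add: mult.assoc)
    have b1: "norm (1 - v * u) \<ge> 1 - r'"
    proof -
      have "norm (v * u) \<le> r'" using vn un rr' by (simp add: norm_mult)
      then show ?thesis using norm_triangle_ineq2[of 1 "v * u"] by simp
    qed
    have b2: "norm (1 - w * u) \<ge> 1 - r'"
    proof -
      have "norm (w * u) \<le> r'" using wn un by (simp add: norm_mult)
      then show ?thesis using norm_triangle_ineq2[of 1 "w * u"] by simp
    qed
    have r'p: "1 - r' > 0" using r'1 by simp
    have n1: "1 - v * u \<noteq> 0" using b1 r'p by auto
    have n2: "1 - w * u \<noteq> 0" using b2 r'p by auto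
    have n3: "e - w \<noteq> 0"
    proof
      assume "e - w = 0"
      then have "w = e" by simp
      moreover have "norm e = 1" unfolding e_def by (rule norm_exp_i_times)
      ultimately have "norm w = 1" by simp
      then show False using wn r'1 by simp
    qed
    have eq: "\<phi>' s = 2 * u * d * (v - w) * (v + w - v * w * u) / ((1 - v * u) * (1 - w * u))"
    proof -
      have "\<phi>' s = d * (w + 2 * v^2 * u / (1 - v * u)) + (- w * d * ((e + w) / (e - w)))"
        by (simp add: \<phi>'_def Dt_def W'_def d_def w_def v_def u_def e_def)
      also have "\<dots> = 2 * u * d * (v - w) * (v + w - v * w * u) / ((1 - v * u) * (1 - w * u))"
        by (rule alg2[OF eu n1 n2 n3])
      finally show ?thesis .
    qed
    have num: "norm (v + w - v * w * u) \<le> 3"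
    proof -
      have "norm (v + w - v * w * u) \<le> norm (v + w) + norm (v * w * u)" by (rule norm_triangle_ineq4)
      also have "\<dots> \<le> (norm v + norm w) + norm v * norm w * norm u"
        by (simp add: norm_mult norm_triangle_ineq)
      also have "\<dots> \<le> 1 + 1 + 1 * 1 * 1"
        using vn wn un r r'1 rr' by (intro add_mono mult_mono) auto
      finally show ?thesis by simp
    qed
    have "norm (\<phi>' s) = 2 * norm d * norm (v - w) * norm (v + w - v * w * u) / (norm (1 - v * u) * norm (1 - w * u))"
      unfolding eq by (simp add: norm_mult norm_divide un)
    also have "\<dots> \<le> 2 * B * \<Delta> * 3 / ((1 - r') * (1 - r'))"
    proof (rule frac_le)
      show "0 \<le> 2 * B * \<Delta> * 3" using \<Delta>0 r by (simp add: B_def)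
      show "2 * norm d * norm (v - w) * norm (v + w - v * w * u) \<le> 2 * B * \<Delta> * 3"
        using dn vw num B0 \<Delta>0 by (intro mult_mono) auto
      show "0 < (1 - r') * (1 - r')" using r'p by simp
      show "(1 - r') * (1 - r') \<le> norm (1 - v * u) * norm (1 - w * u)"
        using b1 b2 r'p by (intro mult_mono) auto
    qed
    also have "\<dots> = M" unfolding M_def omr' by (simp add: power2_eq_square)
    finally show ?thesis .
  qed
  have "norm (\<phi> t - \<phi> 0) \<le> M * norm (t - 0)"
  proof (rule differentiable_bound[of "{0..t}" \<phi> "\<lambda>s h. h *\<^sub>R \<phi>' s"])
    show "convex {0..t}" by simp
    show "(\<phi> has_derivative (\<lambda>h. h *\<^sub>R \<phi>' x)) (at x within {0..t})" if "x \<in> {0..t}" for x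
      using d\<phi>[OF that] by (simp add: has_vector_derivative_def)
    show "onorm (\<lambda>h. h *\<^sub>R \<phi>' x) \<le> M" if "x \<in> {0..t}" for x
      using \<phi>'b[OF that] onorm_scaleR_left[OF bounded_linear_ident, of "\<phi>' x"] by (simp add: onorm_id)
    show "t \<in> {0..t}" "0 \<in> {0..t}" using t by auto
  qed
  then have phi_diff: "norm (\<phi> t - \<phi> 0) \<le> M * t" using t by simp
  have phi0: "\<phi> 0 = W 0"
    unfolding \<phi>_def using init[OF Wb[of 0]] t by simp
  have W0: "norm (W 0 - z * exp (- of_real t)) \<le> \<Delta>"
    using \<delta>n[of 0] t by (simp add: V_def)
  have Vt: "V (of_real t) = z" by (simp add: V_def)
  have lip: "norm (f (W (of_real t)) t - f z t) \<le> B * norm (W (of_real t) - z)"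
  proof (rule field_differentiable_bound[of "cball 0 r'" "\<lambda>w. f w t" "\<lambda>w. deriv (\<lambda>w. f w t) w"])
    show "convex (cball (0::complex) r')" by simp
    show "((\<lambda>w. f w t) has_field_derivative deriv (\<lambda>w. f w t) x) (at x within cball 0 r')"
      if "x \<in> cball 0 r'" for x
    proof -
      have "x \<in> ball 0 1" using that r'1 by simp
      then have "(\<lambda>w. f w t) field_differentiable at x"
        using hol[OF t] holomorphic_on_imp_differentiable_at[of _ "ball 0 1"] by auto
      then show ?thesis
        by (simp add: DERIV_deriv_iff_field_differentiable has_field_derivative_at_within)
    qed
    show "norm (deriv (\<lambda>w. f w t) x) \<le> B" if "x \<in> cball 0 r'" for x using db that t by simp
    show "W (of_real t) \<in> cball 0 r'" using Wn[of t] by simp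
    show "z \<in> cball 0 r'" using z rr' by simp
  qed
  have Wt: "norm (W (of_real t) - z) \<le> \<Delta>" using \<delta>n[of t] Vt by simp
  define X where "X = z * exp (- of_real t)"
  have "norm (f z t - X) = norm (((f z t - \<phi> t) + (\<phi> t - \<phi> 0)) + (\<phi> 0 - X))" by simp
  also have "\<dots> \<le> norm ((f z t - \<phi> t) + (\<phi> t - \<phi> 0)) + norm (\<phi> 0 - X)"
    by (rule norm_triangle_ineq)
  also have "\<dots> \<le> (norm (f z t - \<phi> t) + norm (\<phi> t - \<phi> 0)) + norm (\<phi> 0 - X)"
    by (rule add_right_mono[OF norm_triangle_ineq])
  finally have tri: "norm (f z t - X) \<le> norm (f z t - \<phi> t) + norm (\<phi> t - \<phi> 0) + norm (\<phi> 0 - X)" .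
  have "norm (f z t - z * exp (- of_real t)) \<le>
        norm (f z t - \<phi> t) + norm (\<phi> t - \<phi> 0) + norm (\<phi> 0 - z * exp (- of_real t))"
    using tri by (simp add: X_def)
  also have "\<dots> \<le> B * \<Delta> + M * t + \<Delta>"
  proof (intro add_mono)
    have "norm (f z t - \<phi> t) = norm (f (W (of_real t)) t - f z t)"
      by (simp add: \<phi>_def norm_minus_commute)
    also have "\<dots> \<le> B * norm (W (of_real t) - z)" by (rule lip)
    also have "\<dots> \<le> B * \<Delta>" by (rule mult_left_mono[OF Wt B0])
    finally show "norm (f z t - \<phi> t) \<le> B * \<Delta>" .
    show "norm (\<phi> t - \<phi> 0) \<le> M * t" by (rule phi_diff)
    show "norm (\<phi> 0 - z * exp (- of_real t)) \<le> \<Delta>" using W0 phi0 by simp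
  qed
  also have "\<dots> = (4/(1-r) + 1 + 6 * t * (4/(1-r)) / ((1-r)/2)^2) * (2 * (pi - ln (1 - r)) / a)"
  proof -
    have r1: "1 - r \<noteq> 0" using r by simp
    have "B * \<Delta> + M * t + \<Delta> = (B + 1 + 6 * t * B / ((1-r)/2)^2) * \<Delta>"
      unfolding M_def using r1 by (simp add: field_simps)
    then show ?thesis by (simp add: B_def \<Delta>_def \<Lambda>_def)
  qed
  finally show ?thesis .
qed

theorem proposition3p4:
  fixes f :: "real \<Rightarrow> complex \<Rightarrow> real \<Rightarrow> complex"
  assumes "\<And>a. loewner_sol a (f a)"
  shows "\<forall>t\<ge>0. \<forall>K. compact K \<and> K \<subseteq> ball 0 1 \<longrightarrow>
           uniform_limit K (\<lambda>a z. f a z t) (\<lambda>z. z * exp (- of_real t)) at_top"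
proof (intro allI impI)
  fix t :: real and K :: "complex set"
  assume t: "t \<ge> 0" and KK: "compact K \<and> K \<subseteq> ball 0 1"
  have "\<exists>r. 0 \<le> r \<and> r < 1 \<and> K \<subseteq> cball 0 r"
  proof (cases "K = {}")
    case True then show ?thesis by (intro exI[of _ 0]) auto
  next
    case False
    have "continuous_on K norm" by (intro continuous_intros)
    then obtain k where k: "k \<in> K" and kmax: "\<And>y. y \<in> K \<Longrightarrow> norm y \<le> norm k"
      using continuous_attains_sup[OF conjunct1[OF KK] False] by blast
    have "norm k < 1" using k KK by auto
    then show ?thesis using kmax by (intro exI[of _ "norm k"]) auto
  qed
  then obtain r where r: "0 \<le> r" "r < 1" and Kr: "K \<subseteq> cball 0 r" by blast
  define \<Lambda> where "\<Lambda> = pi - ln (1 - r)"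
  define C where "C = 4/(1-r) + 1 + 6 * t * (4/(1-r)) / ((1-r)/2)^2"
  have "ln (1 - r) \<le> 0" using r by (subst ln_le_zero_iff) auto
  then have \<Lambda>0: "\<Lambda> \<ge> 0" unfolding \<Lambda>_def using pi_gt_zero by linarith
  have C0: "C \<ge> 0" unfolding C_def using r t by (intro add_nonneg_nonneg divide_nonneg_nonneg mult_nonneg_nonneg) auto
  have r1: "1 - r > 0" using r by simp
  show "uniform_limit K (\<lambda>a z. f a z t) (\<lambda>z. z * exp (- of_real t)) at_top"
    unfolding uniform_limit_iff
  proof (intro allI impI)
    fix e :: real assume e: "e > 0"
    define A where "A = max 1 (max (4 * \<Lambda> / (1 - r)) (2 * C * \<Lambda> / e + 1))"
    show "\<forall>\<^sub>F a in at_top. \<forall>z\<in>K. dist (f a z t) (z * exp (- of_real t)) < e"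
      using eventually_ge_at_top[of A]
    proof eventually_elim
      case (elim a)
      have a1: "a \<ge> 1" and a2: "4 * \<Lambda> / (1 - r) \<le> a" and a3: "2 * C * \<Lambda> / e + 1 \<le> a"
        using elim unfolding A_def by auto
      have a0: "a > 0" using a1 by simp
      have "4 * \<Lambda> \<le> a * (1 - r)" using a2 r1 by (simp add: pos_divide_le_eq)
      then have aL: "2 * (pi - ln (1 - r)) / a \<le> (1 - r)/2"
        using a0 unfolding \<Lambda>_def by (simp add: pos_divide_le_eq field_simps)
      have "2 * C * \<Lambda> / e < a" using a3 by simp
      then have "2 * C * \<Lambda> < a * e" using e by (simp add: pos_divide_less_eq)
      then have bnd: "C * (2 * \<Lambda> / a) < e" using a0 by (simp add: pos_divide_less_eq field_simps)
      show ?case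
      proof
        fix z assume "z \<in> K"
        then have z: "z \<in> cball 0 r" using Kr by auto
        have "norm (f a z t - z * exp (- of_real t)) \<le> C * (2 * \<Lambda> / a)"
          using key_estimate[OF assms r t z a0 aL] unfolding C_def \<Lambda>_def by simp
        then show "dist (f a z t) (z * exp (- of_real t)) < e"
          using bnd by (simp add: dist_norm)
      qed
    qed
  qed
qed

end
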